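(* Let $X$ be a complex vector space equipped with an inner product $\langle\cdot,\cdot\rangle'$. Suppose that for each $\alpha\in(0,1]$ we are given a map $\langle\cdot,\cdot\rangle_\alpha : X\times X\to\mathbb{C}$ and real constants $A_\alpha,B_\alpha$ with $0<A_\alpha\le B_\alpha<\infty$ such that for all $x,y\in X$ and all $\alpha\in(0,1]$, \[ A_\alpha\,|\langle x,y\rangle'| \le |\langle x,y\rangle_\alpha| \le B_\alpha\,|\langle x,y\rangle'|. \] Then for all $x,y,z\in X$, all $k\in\mathbb{C}$ and all $\alpha\in(0,1]$: 1. $\langle x,x\rangle_\alpha=0$ if and only if $x=0$; 2. $\langle 0,y\rangle_\alpha=0$; 3. $\frac{|k|A_\alpha}{B_\alpha}|\langle x,y\rangle_\alpha|\le |\langle kx,y\rangle_\alpha|\le \frac{|k|B_\alpha}{A_\alpha}|\langle x,y\rangle_\alpha|$; 4. $\frac{|k|A_\alpha}{B_\alpha}|\langle x,y\rangle_\alpha|\le |\langle x,ky\rangle_\alpha|\le \frac{|k|B_\alpha}{A_\alpha}|\langle x,y\rangle_\alpha|$; 5. $\frac{|k|A_\alpha}{B_\alpha}|\langle y,x\rangle_\alpha|\le |\langle kx,y\rangle_\alpha|\le \frac{|k|B_\alpha}{A_\alpha}|\langle y,x\rangle_\alpha|$; 6. $\frac{|k|A_\alpha}{B_\alpha}|\langle y,x\rangle_\alpha|\le |\langle x,|k|y\rangle_\alpha|\le \frac{|k|B_\alpha}{A_\alpha}|\langle y,x\rangle_\alpha|$; 7. $\frac{A_\alpha}{B_\alpha}|\langle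 x,ky\rangle_\alpha|\le |\langle kx,y\rangle_\alpha|\le \frac{B_\alpha}{A_\alpha}|\langle x,ky\rangle_\alpha|$; 8. $\frac{A_\alpha}{B_\alpha}|\langle kx,y\rangle_\alpha|\le |\langle x,ky\rangle_\alpha|\le \frac{B_\alpha}{A_\alpha}|\langle kx,y\rangle_\alpha|$; 9. $\frac{A_\alpha}{B_\alpha}|\langle ky,x\rangle_\alpha|\le |\langle kx,y\rangle_\alpha|\le \frac{B_\alpha}{A_\alpha}|\langle ky,x\rangle_\alpha|$; 10. $\frac{A_\alpha}{B_\alpha}|\langle ky,x\rangle_\alpha|\le |\langle x,ky\rangle_\alpha|\le \frac{B_\alpha}{A_\alpha}|\langle ky,x\rangle_\alpha|$; 11. $|\langle kx+z,y\rangle_\alpha|\le \frac{B_\alpha}{A_\alpha}\big(|k|\,|\langle x,y\rangle_\alpha|+|\langle z,y\rangle_\alpha|\big)$; 12. $|\langle x,ky+z\rangle_\alpha|\le \frac{B_\alpha}{A_\alpha}\big(|k|\,|\langle x,y\rangle_\alpha|+|\langle x,z\rangle_\alpha|\big)$.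
   Context: The map $\langle\cdot,\cdot\rangle_\alpha$ satisfying the two-sided bound is the paper's (simplified) "fuzzy inner product" relative to the classical inner product $\langle\cdot,\cdot\rangle'$. *)

theory Defs
  imports "HOL-Analysis.Analysis"
begin

text \<open>A complex vector space is given by an additive abelian group 'a together with a
  complex scalar multiplication sc satisfying the vector space axioms (library locale
  vector_space).\<close>

definition complex_inner_product ::
  "(complex \<Rightarrow> 'a::ab_group_add \<Rightarrow> 'a) \<Rightarrow> ('a \<Rightarrow> 'a \<Rightarrow> complex) \<Rightarrow> bool" where
  "complex_inner_product sc ip \<longleftrightarrow>
     (\<forall>x y. ip y x = cnj (ip x y)) \<and>
     (\<forall>x y z. ip (x + y) z = ip x z + ip y z) \<and>
     (\<forall>c x y. ip (sc c x) y = c * ip x y) \<and>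
     (\<forall>x. Im (ip x x) = 0 \<and> Re (ip x x) \<ge> 0) \<and>
     (\<forall>x. ip x x = 0 \<longleftrightarrow> x = 0)"

end

theory Submission
  imports Defs
begin

lemma scal_bnd:
  fixes A B f1 f2 m1 m2 c :: real
  assumes "0 < A" "A \<le> B" "A*m1 \<le> f1" "f1 \<le> B*m1" "A*m2 \<le> f2" "f2 \<le> B*m2"
    "m2 = c*m1" "0 \<le> c" "0 \<le> m1"
  shows "c * A / B * f1 \<le> f2 \<and> f2 \<le> c * B / A * f1"
proof
  have B: "0 < B" using assms by linarith
  have "c * A / B * f1 \<le> c * A / B * (B*m1)"
    using assms B by (intro mult_left_mono) auto
  also have "\<dots> = A * m2" using B assms by (simp add: field_simps)
  finally show "c * A / B * f1 \<le> f2" using assms by linarith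
  have "f2 \<le> c * B * m1" using assms by (simp add: mult.assoc mult.left_commute)
  also have "\<dots> = c * B / A * (A*m1)" using assms by (simp add: field_simps)
  also have "\<dots> \<le> c * B / A * f1" using assms B by (intro mult_left_mono) auto
  finally show "f2 \<le> c * B / A * f1" .
qed

lemma scal_bnd1:
  fixes A B f1 f2 m1 m2 :: real
  assumes "0 < A" "A \<le> B" "A*m1 \<le> f1" "f1 \<le> B*m1" "A*m2 \<le> f2" "f2 \<le> B*m2"
    "m2 = m1" "0 \<le> m1"
  shows "A / B * f1 \<le> f2 \<and> f2 \<le> B / A * f1"
  using scal_bnd[of A B m1 f1 m2 f2 1] assms by simp

theorem mainTheorem4:
  fixes sc :: "complex \<Rightarrow> 'a::ab_group_add \<Rightarrow> 'a"
    and ip :: "'a \<Rightarrow> 'a \<Rightarrow> complex"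
    and fip :: "real \<Rightarrow> 'a \<Rightarrow> 'a \<Rightarrow> complex"
    and A B :: "real \<Rightarrow> real"
  assumes vs: "Vector_Spaces.vector_space sc"
    and ipc: "complex_inner_product sc ip"
    and AB: "\<And>\<alpha>. \<alpha> \<in> {0<..1} \<Longrightarrow> 0 < A \<alpha> \<and> A \<alpha> \<le> B \<alpha>"
    and bnd: "\<And>\<alpha> x y. \<alpha> \<in> {0<..1} \<Longrightarrow>
        A \<alpha> * cmod (ip x y) \<le> cmod (fip \<alpha> x y) \<and> cmod (fip \<alpha> x y) \<le> B \<alpha> * cmod (ip x y)"
  shows "\<forall>\<alpha>\<in>{0<..1}. \<forall>x y z. \<forall>k::complex.
    (fip \<alpha> x x = 0 \<longleftrightarrow> x = 0) \<and>
    fip \<alpha> 0 y = 0 \<and>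
    (cmod k * A \<alpha> / B \<alpha> * cmod (fip \<alpha> x y) \<le> cmod (fip \<alpha> (sc k x) y) \<and>
       cmod (fip \<alpha> (sc k x) y) \<le> cmod k * B \<alpha> / A \<alpha> * cmod (fip \<alpha> x y)) \<and>
    (cmod k * A \<alpha> / B \<alpha> * cmod (fip \<alpha> x y) \<le> cmod (fip \<alpha> x (sc k y)) \<and>
       cmod (fip \<alpha> x (sc k y)) \<le> cmod k * B \<alpha> / A \<alpha> * cmod (fip \<alpha> x y)) \<and>
    (cmod k * A \<alpha> / B \<alpha> * cmod (fip \<alpha> y x) \<le> cmod (fip \<alpha> (sc k x) y) \<and>
       cmod (fip \<alpha> (sc k x) y) \<le> cmod k * B \<alpha> / A \<alpha> * cmod (fip \<alpha> y x)) \<and>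
    (cmod k * A \<alpha> / B \<alpha> * cmod (fip \<alpha> y x) \<le> cmod (fip \<alpha> x (sc (complex_of_real (cmod k)) y)) \<and>
       cmod (fip \<alpha> x (sc (complex_of_real (cmod k)) y)) \<le> cmod k * B \<alpha> / A \<alpha> * cmod (fip \<alpha> y x)) \<and>
    (A \<alpha> / B \<alpha> * cmod (fip \<alpha> x (sc k y)) \<le> cmod (fip \<alpha> (sc k x) y) \<and>
       cmod (fip \<alpha> (sc k x) y) \<le> B \<alpha> / A \<alpha> * cmod (fip \<alpha> x (sc k y))) \<and>
    (A \<alpha> / B \<alpha> * cmod (fip \<alpha> (sc k x) y) \<le> cmod (fip \<alpha> x (sc k y)) \<and>
       cmod (fip \<alpha> x (sc k y)) \<le> B \<alpha> / A \<alpha> * cmod (fip \<alpha> (sc k x) y)) \<and>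
    (A \<alpha> / B \<alpha> * cmod (fip \<alpha> (sc k y) x) \<le> cmod (fip \<alpha> (sc k x) y) \<and>
       cmod (fip \<alpha> (sc k x) y) \<le> B \<alpha> / A \<alpha> * cmod (fip \<alpha> (sc k y) x)) \<and>
    (A \<alpha> / B \<alpha> * cmod (fip \<alpha> (sc k y) x) \<le> cmod (fip \<alpha> x (sc k y)) \<and>
       cmod (fip \<alpha> x (sc k y)) \<le> B \<alpha> / A \<alpha> * cmod (fip \<alpha> (sc k y) x)) \<and>
    cmod (fip \<alpha> (sc k x + z) y) \<le> B \<alpha> / A \<alpha> * (cmod k * cmod (fip \<alpha> x y) + cmod (fip \<alpha> z y)) \<and>
    cmod (fip \<alpha> x (sc k y + z)) \<le> B \<alpha> / A \<alpha> * (cmod k * cmod (fip \<alpha> x y) + cmod (fip \<alpha> x z))"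
proof (intro ballI allI)
  fix \<alpha> :: real and x y z :: 'a and k :: complex
  assume a: "\<alpha> \<in> {0<..1}"
  define a0 where "a0 = A \<alpha>"
  define b0 where "b0 = B \<alpha>"
  define f where "f = fip \<alpha>"
  have A0: "0 < a0" "a0 \<le> b0" using AB[OF a] by (auto simp: a0_def b0_def)
  have bd: "\<And>u v. a0 * cmod (ip u v) \<le> cmod (f u v) \<and> cmod (f u v) \<le> b0 * cmod (ip u v)"
    using bnd[OF a] by (simp add: a0_def b0_def f_def)
  have sym: "\<And>u v. ip v u = cnj (ip u v)" using ipc unfolding complex_inner_product_def by blast
  have addl: "\<And>u v w. ip (u + v) w = ip u w + ip v w" using ipc unfolding complex_inner_product_def by blast
  have scl: "\<And>c u v. ip (sc c u) v = c * ip u v" using ipc unfolding complex_inner_product_def by blast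
  have pd: "\<And>u. ip u u = 0 \<longleftrightarrow> u = 0" using ipc unfolding complex_inner_product_def by blast
  have scr: "\<And>c u v. ip u (sc c v) = cnj c * ip u v"
    by (metis sym scl complex_cnj_mult complex_cnj_cnj)
  have addr: "\<And>u v w. ip w (u + v) = ip w u + ip w v"
    by (metis sym addl complex_cnj_add)
  have z0: "\<And>v. ip 0 v = 0" using addl[of 0 0] by simp
  have ms: "\<And>u v. cmod (ip v u) = cmod (ip u v)" by (metis sym complex_mod_cnj)
  have f0: "\<And>u v. cmod (f u v) = 0 \<longleftrightarrow> ip u v = 0"
  proof -
    fix u v
    have "a0 * cmod (ip u v) \<le> cmod (f u v)" "cmod (f u v) \<le> b0 * cmod (ip u v)" using bd by auto
    moreover have "0 \<le> a0 * cmod (ip u v)" using A0 by simp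
    ultimately show "cmod (f u v) = 0 \<longleftrightarrow> ip u v = 0" using A0
      by (smt (verit) mult_eq_0_iff norm_eq_zero norm_ge_zero)
  qed
  note sb = scal_bnd[OF A0, OF conjunct1[OF bd] conjunct2[OF bd] conjunct1[OF bd] conjunct2[OF bd]]
  note sb1 = scal_bnd1[OF A0, OF conjunct1[OF bd] conjunct2[OF bd] conjunct1[OF bd] conjunct2[OF bd]]
  have i1: "f x x = 0 \<longleftrightarrow> x = 0" using f0[of x x] pd[of x] by simp
  have i2: "f 0 y = 0" using f0[of 0 y] z0 by simp
  have i3: "cmod k * a0 / b0 * cmod (f x y) \<le> cmod (f (sc k x) y) \<and>
       cmod (f (sc k x) y) \<le> cmod k * b0 / a0 * cmod (f x y)"
    by (rule sb) (auto simp: scl norm_mult)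
  have i4: "cmod k * a0 / b0 * cmod (f x y) \<le> cmod (f x (sc k y)) \<and>
       cmod (f x (sc k y)) \<le> cmod k * b0 / a0 * cmod (f x y)"
    by (rule sb) (auto simp: scr norm_mult)
  have i5: "cmod k * a0 / b0 * cmod (f y x) \<le> cmod (f (sc k x) y) \<and>
       cmod (f (sc k x) y) \<le> cmod k * b0 / a0 * cmod (f y x)"
    by (rule sb) (auto simp: scl norm_mult ms[of x y])
  have i6: "cmod k * a0 / b0 * cmod (f y x) \<le> cmod (f x (sc (complex_of_real (cmod k)) y)) \<and>
       cmod (f x (sc (complex_of_real (cmod k)) y)) \<le> cmod k * b0 / a0 * cmod (f y x)"
    by (rule sb) (auto simp: scr norm_mult ms[of x y])
  have i7: "a0 / b0 * cmod (f x (sc k y)) \<le> cmod (f (sc k x) y) \<and>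
       cmod (f (sc k x) y) \<le> b0 / a0 * cmod (f x (sc k y))"
    by (rule sb1) (auto simp: scl scr norm_mult)
  have i8: "a0 / b0 * cmod (f (sc k x) y) \<le> cmod (f x (sc k y)) \<and>
       cmod (f x (sc k y)) \<le> b0 / a0 * cmod (f (sc k x) y)"
    by (rule sb1) (auto simp: scl scr norm_mult)
  have i9: "a0 / b0 * cmod (f (sc k y) x) \<le> cmod (f (sc k x) y) \<and>
       cmod (f (sc k x) y) \<le> b0 / a0 * cmod (f (sc k y) x)"
    by (rule sb1) (auto simp: scl scr norm_mult ms[of x y])
  have i10: "a0 / b0 * cmod (f (sc k y) x) \<le> cmod (f x (sc k y)) \<and>
       cmod (f x (sc k y)) \<le> b0 / a0 * cmod (f (sc k y) x)"
    by (rule sb1) (auto simp: scl scr norm_mult ms[of x y])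
  have mle: "\<And>u v. cmod (ip u v) \<le> cmod (f u v) / a0"
    using bd A0 by (simp add: field_simps mult.commute)
  have b0: "0 < b0" using A0 by linarith
  have i11: "cmod (f (sc k x + z) y) \<le> b0 / a0 * (cmod k * cmod (f x y) + cmod (f z y))"
  proof -
    have "cmod (f (sc k x + z) y) \<le> b0 * cmod (ip (sc k x + z) y)" using bd by blast
    also have "\<dots> \<le> b0 * (cmod k * cmod (ip x y) + cmod (ip z y))"
      using b0 by (intro mult_left_mono) (auto simp: addl scl norm_mult intro: norm_triangle_le)
    also have "\<dots> \<le> b0 * (cmod k * (cmod (f x y) / a0) + cmod (f z y) / a0)"
      using b0 mle by (intro mult_left_mono add_mono mult_left_mono) auto
    also have "\<dots> = b0 / a0 * (cmod k * cmod (f x y) + cmod (f z y))"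
      using A0 by (simp add: field_simps)
    finally show ?thesis .
  qed
  have i12: "cmod (f x (sc k y + z)) \<le> b0 / a0 * (cmod k * cmod (f x y) + cmod (f x z))"
  proof -
    have "cmod (f x (sc k y + z)) \<le> b0 * cmod (ip x (sc k y + z))" using bd by blast
    also have "\<dots> \<le> b0 * (cmod k * cmod (ip x y) + cmod (ip x z))"
      using b0 by (intro mult_left_mono) (auto simp: addr scr norm_mult intro: norm_triangle_le)
    also have "\<dots> \<le> b0 * (cmod k * (cmod (f x y) / a0) + cmod (f x z) / a0)"
      using b0 mle by (intro mult_left_mono add_mono mult_left_mono) auto
    also have "\<dots> = b0 / a0 * (cmod k * cmod (f x y) + cmod (f x z))"
      using A0 by (simp add: field_simps)
    finally show ?thesis .
  qed
  show "(fip \<alpha> x x = 0 \<longleftrightarrow> x = 0) \<and>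
    fip \<alpha> 0 y = 0 \<and>
    (cmod k * A \<alpha> / B \<alpha> * cmod (fip \<alpha> x y) \<le> cmod (fip \<alpha> (sc k x) y) \<and>
       cmod (fip \<alpha> (sc k x) y) \<le> cmod k * B \<alpha> / A \<alpha> * cmod (fip \<alpha> x y)) \<and>
    (cmod k * A \<alpha> / B \<alpha> * cmod (fip \<alpha> x y) \<le> cmod (fip \<alpha> x (sc k y)) \<and>
       cmod (fip \<alpha> x (sc k y)) \<le> cmod k * B \<alpha> / A \<alpha> * cmod (fip \<alpha> x y)) \<and>
    (cmod k * A \<alpha> / B \<alpha> * cmod (fip \<alpha> y x) \<le> cmod (fip \<alpha> (sc k x) y) \<and>
       cmod (fip \<alpha> (sc k x) y) \<le> cmod k * B \<alpha> / A \<alpha> * cmod (fip \<alpha> y x)) \<and>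
    (cmod k * A \<alpha> / B \<alpha> * cmod (fip \<alpha> y x) \<le> cmod (fip \<alpha> x (sc (complex_of_real (cmod k)) y)) \<and>
       cmod (fip \<alpha> x (sc (complex_of_real (cmod k)) y)) \<le> cmod k * B \<alpha> / A \<alpha> * cmod (fip \<alpha> y x)) \<and>
    (A \<alpha> / B \<alpha> * cmod (fip \<alpha> x (sc k y)) \<le> cmod (fip \<alpha> (sc k x) y) \<and>
       cmod (fip \<alpha> (sc k x) y) \<le> B \<alpha> / A \<alpha> * cmod (fip \<alpha> x (sc k y))) \<and>
    (A \<alpha> / B \<alpha> * cmod (fip \<alpha> (sc k x) y) \<le> cmod (fip \<alpha> x (sc k y)) \<and>
       cmod (fip \<alpha> x (sc k y)) \<le> B \<alpha> / A \<alpha> * cmod (fip \<alpha> (sc k x) y)) \<and>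
    (A \<alpha> / B \<alpha> * cmod (fip \<alpha> (sc k y) x) \<le> cmod (fip \<alpha> (sc k x) y) \<and>
       cmod (fip \<alpha> (sc k x) y) \<le> B \<alpha> / A \<alpha> * cmod (fip \<alpha> (sc k y) x)) \<and>
    (A \<alpha> / B \<alpha> * cmod (fip \<alpha> (sc k y) x) \<le> cmod (fip \<alpha> x (sc k y)) \<and>
       cmod (fip \<alpha> x (sc k y)) \<le> B \<alpha> / A \<alpha> * cmod (fip \<alpha> (sc k y) x)) \<and>
    cmod (fip \<alpha> (sc k x + z) y) \<le> B \<alpha> / A \<alpha> * (cmod k * cmod (fip \<alpha> x y) + cmod (fip \<alpha> z y)) \<and>
    cmod (fip \<alpha> x (sc k y + z)) \<le> B \<alpha> / A \<alpha> * (cmod k * cmod (fip \<alpha> x y) + cmod (fip \<alpha> x z))"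
    using i1 i2 i3 i4 i5 i6 i7 i8 i9 i10 i11 i12 unfolding a0_def b0_def f_def by blast
qed

end
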